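(* Let $H_1,H_2$ be complex Hilbert spaces and let $T$ be a densely defined closed operator from $H_1$ to $H_2$ which is bounded below (i.e. there is $c>0$ with $\|Tx\|\geq c\|x\|$ for all $x\in D(T)$). Then for every $\epsilon>0$ there exists a densely defined closed minimum attaining operator $\tilde T$ from $H_1$ to $H_2$ such that $\theta(T,\tilde T)\leq\epsilon$.
   Context: Hilbert spaces are complex and infinite dimensional. For a densely defined closed operator $A$ with domain $D(A)$, $m(A)=\inf\{\|Ax\|: x\in D(A),\ \|x\|=1\}$, and $A$ is minimum attaining if there exists $x_0\in D(A)$, $\|x_0\|=1$, with $\|Ax_0\|=m(A)$. The gap between densely defined closed operators is $\theta(A,B)=\|P_{G(A)}-P_{G(B)}\|$, where $G(A)=\{(Ax,x):x\in D(A)\}$ and $P_M$ is the orthogonal projection onto $M$. *)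

theory Defs
  imports "HOL-Analysis.Analysis"
begin

text \<open>HOL-Analysis has no complex vector spaces, so the
standard axioms are spelled out as a type class.\<close>

class chilbert_space = banach +
  fixes scaleC :: "complex \<Rightarrow> 'a \<Rightarrow> 'a" (infixr \<open>*\<^sub>C\<close> 75)
    and cinner :: "'a \<Rightarrow> 'a \<Rightarrow> complex"
  assumes scaleC_add_right: "a *\<^sub>C (x + y) = a *\<^sub>C x + a *\<^sub>C y"
    and scaleC_add_left: "(a + b) *\<^sub>C x = a *\<^sub>C x + b *\<^sub>C x"
    and scaleC_scaleC: "a *\<^sub>C (b *\<^sub>C x) = (a * b) *\<^sub>C x"
    and scaleC_one: "1 *\<^sub>C x = x"
    and scaleR_scaleC: "scaleR r x = complex_of_real r *\<^sub>C x"
    and cinner_add_left: "cinner (x + y) z = cinner x z + cinner y z"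
    and cinner_scaleC_left: "cinner (a *\<^sub>C x) y = cnj a * cinner x y"
    and cinner_commute: "cinner x y = cnj (cinner y x)"
    and cinner_ge_zero: "0 \<le> Re (cinner x x)"
    and norm_eq_sqrt_cinner: "norm x = sqrt (Re (cinner x x))"

definition cspan :: "'a::chilbert_space set \<Rightarrow> 'a set" where
  "cspan B = {\<Sum>b\<in>F. c b *\<^sub>C b | F c. finite F \<and> F \<subseteq> B}"

definition infinite_dimensional :: "'a::chilbert_space itself \<Rightarrow> bool" where
  "infinite_dimensional _ \<longleftrightarrow> \<not> (\<exists>B::'a set. finite B \<and> cspan B = UNIV)"

definition csubspace :: "'a::chilbert_space set \<Rightarrow> bool" where
  "csubspace S \<longleftrightarrow> 0 \<in> S \<and> (\<forall>x\<in>S. \<forall>y\<in>S. x + y \<in> S) \<and> (\<forall>c. \<forall>x\<in>S. c *\<^sub>C x \<in> S)"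

text \<open>An (unbounded) operator from H1 to H2 is represented by its domain \<open>D\<close> and a function
\<open>T\<close> whose values outside \<open>D\<close> are irrelevant.\<close>

definition graph :: "'a::chilbert_space set \<Rightarrow> ('a \<Rightarrow> 'b::chilbert_space) \<Rightarrow> ('b \<times> 'a) set" where
  "graph D T = {(T x, x) | x. x \<in> D}"

definition densely_defined_closed ::
    "'a::chilbert_space set \<Rightarrow> ('a \<Rightarrow> 'b::chilbert_space) \<Rightarrow> bool" where
  "densely_defined_closed D T \<longleftrightarrow>
     csubspace D \<and> closure D = UNIV \<and>
     (\<forall>x\<in>D. \<forall>y\<in>D. T (x + y) = T x + T y) \<and>
     (\<forall>c. \<forall>x\<in>D. T (c *\<^sub>C x) = c *\<^sub>C T x) \<and>
     closed (graph D T)"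

definition bounded_below :: "'a::chilbert_space set \<Rightarrow> ('a \<Rightarrow> 'b::chilbert_space) \<Rightarrow> bool" where
  "bounded_below D T \<longleftrightarrow> (\<exists>c>0. \<forall>x\<in>D. norm (T x) \<ge> c * norm x)"

definition min_modulus :: "'a::chilbert_space set \<Rightarrow> ('a \<Rightarrow> 'b::chilbert_space) \<Rightarrow> real" where
  "min_modulus D T = Inf ((\<lambda>x. norm (T x)) ` {x\<in>D. norm x = 1})"

definition minimum_attaining :: "'a::chilbert_space set \<Rightarrow> ('a \<Rightarrow> 'b::chilbert_space) \<Rightarrow> bool" where
  "minimum_attaining D T \<longleftrightarrow> (\<exists>x0\<in>D. norm x0 = 1 \<and> norm (T x0) = min_modulus D T)"

text \<open>The Hilbert space \<open>H2 \<oplus> H1\<close>: inner product of the direct sum (its induced norm is the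
library product norm \<open>sqrt (\<parallel>u\<parallel>^2 + \<parallel>v\<parallel>^2)\<close>).\<close>

definition pinner :: "'b::chilbert_space \<times> 'a::chilbert_space \<Rightarrow> 'b \<times> 'a \<Rightarrow> complex" where
  "pinner z w = cinner (fst z) (fst w) + cinner (snd z) (snd w)"

definition orth_proj :: "('b::chilbert_space \<times> 'a::chilbert_space) set \<Rightarrow> 'b \<times> 'a \<Rightarrow> 'b \<times> 'a" where
  "orth_proj M z = (THE p. p \<in> M \<and> (\<forall>m\<in>M. pinner (z - p) m = 0))"

definition gap ::
  "'a::chilbert_space set \<Rightarrow> ('a \<Rightarrow> 'b::chilbert_space) \<Rightarrow> 'a set \<Rightarrow> ('a \<Rightarrow> 'b) \<Rightarrow> real" where
  "gap DA A DB B = onorm (\<lambda>z. orth_proj (graph DA A) z - orth_proj (graph DB B) z)"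

end

theory Submission
  imports Defs
begin

section \<open>Basic complex Hilbert space algebra\<close>


lemma scaleC_zero_left[simp]: "(0::complex) *\<^sub>C (x::'a::chilbert_space) = 0"
  by (metis scaleR_scaleC scaleR_zero_left of_real_0)

lemma scaleC_zero_right[simp]: "a *\<^sub>C (0::'a::chilbert_space) = 0"
proof -
  have "a *\<^sub>C (0::'a) = a *\<^sub>C 0 + a *\<^sub>C 0" by (metis add_0 scaleC_add_right)
  then show ?thesis by simp
qed

lemma scaleC_minus_left: "(- a) *\<^sub>C (x::'a::chilbert_space) = - (a *\<^sub>C x)"
proof -
  have "a *\<^sub>C x + (- a) *\<^sub>C x = 0" by (metis scaleC_add_left add.right_inverse scaleC_zero_left)
  then show ?thesis by (simp add: eq_neg_iff_add_eq_0 add.commute)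
qed

lemma scaleC_minus_right: "a *\<^sub>C (- x::'a::chilbert_space) = - (a *\<^sub>C x)"
proof -
  have "a *\<^sub>C x + a *\<^sub>C (- x) = 0" by (metis scaleC_add_right add.right_inverse scaleC_zero_right)
  then show ?thesis by (simp add: eq_neg_iff_add_eq_0 add.commute)
qed

lemma scaleC_diff_right: "a *\<^sub>C (x - y::'a::chilbert_space) = a *\<^sub>C x - a *\<^sub>C y"
  by (metis diff_conv_add_uminus scaleC_add_right scaleC_minus_right)

lemma scaleC_diff_left: "(a - b) *\<^sub>C (x::'a::chilbert_space) = a *\<^sub>C x - b *\<^sub>C x"
  by (metis diff_conv_add_uminus scaleC_add_left scaleC_minus_left)

lemma scaleC_one_simp[simp]: "1 *\<^sub>C (x::'a::chilbert_space) = x" by (rule scaleC_one)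

lemma scaleC_eq_scaleR: "complex_of_real r *\<^sub>C (x::'a::chilbert_space) = r *\<^sub>R x"
  by (simp add: scaleR_scaleC)

lemma cinner_zero_left[simp]: "cinner (0::'a::chilbert_space) y = 0"
proof -
  have "cinner (0::'a) y = cinner 0 y + cinner 0 y" by (metis add_0 cinner_add_left)
  then show ?thesis by simp
qed

lemma cinner_add_right: "cinner (x::'a::chilbert_space) (y + z) = cinner x y + cinner x z"
  by (metis cinner_commute cinner_add_left complex_cnj_add)

lemma cinner_scaleC_right: "cinner (x::'a::chilbert_space) (a *\<^sub>C y) = a * cinner x y"
  by (metis cinner_commute cinner_scaleC_left complex_cnj_cnj complex_cnj_mult)

lemma cinner_zero_right[simp]: "cinner (x::'a::chilbert_space) 0 = 0"
  by (metis cinner_commute cinner_zero_left complex_cnj_zero)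

lemma cinner_minus_left: "cinner (- x::'a::chilbert_space) y = - cinner x y"
proof -
  have "- x = (-1::complex) *\<^sub>C x" by (simp add: scaleC_minus_left)
  then show ?thesis by (simp add: cinner_scaleC_left)
qed

lemma cinner_minus_right: "cinner (x::'a::chilbert_space) (- y) = - cinner x y"
proof -
  have "- y = (-1::complex) *\<^sub>C y" by (simp add: scaleC_minus_left)
  then show ?thesis by (simp add: cinner_scaleC_right)
qed

lemma cinner_diff_left: "cinner (x - y::'a::chilbert_space) z = cinner x z - cinner y z"
  by (simp only: diff_conv_add_uminus cinner_add_left cinner_minus_left)

lemma cinner_diff_right: "cinner (x::'a::chilbert_space) (y - z) = cinner x y - cinner x z"
  by (simp only: diff_conv_add_uminus cinner_add_right cinner_minus_right)

lemma cinner_self: "cinner (x::'a::chilbert_space) x = complex_of_real ((norm x)^2)"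
proof -
  have "Im (cinner x x) = Im (cnj (cinner x x))" using cinner_commute[of x x] by (rule arg_cong)
  then have im: "Im (cinner x x) = 0" by simp
  have re: "Re (cinner x x) = (norm x)^2" using norm_eq_sqrt_cinner[of x] cinner_ge_zero[of x] by simp
  show ?thesis using im re by (simp add: complex_eq_iff)
qed

lemma re_cinner_self: "Re (cinner (x::'a::chilbert_space) x) = (norm x)^2"
  by (simp add: cinner_self)

lemma norm_scaleC: "norm (a *\<^sub>C (x::'a::chilbert_space)) = cmod a * norm x"
proof -
  have "(norm (a *\<^sub>C x))^2 = Re (cinner (a *\<^sub>C x) (a *\<^sub>C x))" by (rule re_cinner_self[symmetric])
  also have "\<dots> = Re (cnj a * a * cinner x x)"
    by (simp add: cinner_scaleC_left cinner_scaleC_right mult_ac)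
  also have "\<dots> = (cmod a)^2 * (norm x)^2"
    by (simp only: cinner_self complex_mult_cnj mult.commute) (simp add: mult.commute cmod_power2)
  finally have "(norm (a *\<^sub>C x))^2 = (cmod a * norm x)^2" by (simp add: power_mult_distrib)
  then show ?thesis by (simp add: power2_eq_iff_nonneg)
qed

lemma norm_add_sq: "(norm (x + y::'a::chilbert_space))^2 = (norm x)^2 + (norm y)^2 + 2 * Re (cinner x y)"
proof -
  have c: "Re (cinner y x) = Re (cinner x y)" by (metis cinner_commute complex_cnj_cnj cnj.simps(1))
  have "(norm (x + y))^2 = Re (cinner (x + y) (x + y))" by (rule re_cinner_self[symmetric])
  also have "\<dots> = Re (cinner x x) + Re (cinner y y) + Re (cinner x y) + Re (cinner y x)"
    by (simp add: cinner_add_left cinner_add_right)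
  also have "\<dots> = (norm x)^2 + (norm y)^2 + 2 * Re (cinner x y)"
    by (simp add: re_cinner_self c)
  finally show ?thesis .
qed

lemma norm_diff_sq: "(norm (x - y::'a::chilbert_space))^2 = (norm x)^2 + (norm y)^2 - 2 * Re (cinner x y)"
  using norm_add_sq[of x "- y"] by (simp add: cinner_minus_right)

lemma discriminant:
  fixes A B C :: real
  assumes "C \<ge> 0" and h: "\<And>t. 0 \<le> A - 2 * B * t + C * t^2"
  shows "B^2 \<le> A * C"
proof (cases "C = 0")
  case True
  have "B = 0"
  proof (rule ccontr)
    assume "B \<noteq> 0"
    have "0 \<le> A - 2 * B * ((A + 1) / (2 * B))" using h[of "(A+1)/(2*B)"] True by simp
    also have "\<dots> = -1" using \<open>B \<noteq> 0\<close> by (simp add: field_simps)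
    finally show False by simp
  qed
  then show ?thesis using True by simp
next
  case False
  then have C: "C > 0" using assms(1) by simp
  have "0 \<le> A - 2 * B * (B / C) + C * (B / C)^2" by (rule h)
  also have "\<dots> = A - B^2 / C" using C by (simp add: field_simps power2_eq_square)
  finally show ?thesis using C by (simp add: field_simps)
qed

lemma re_cinner_le: "Re (cinner x y) \<le> norm (x::'a::chilbert_space) * norm y"
proof -
  have "(Re (cinner x y))^2 \<le> (norm x)^2 * (norm y)^2"
  proof (rule discriminant)
    fix t :: real
    have "0 \<le> (norm (x - t *\<^sub>R y))^2" by simp
    also have "\<dots> = (norm x)^2 - 2 * Re (cinner x y) * t + (norm y)^2 * t^2"
      by (simp add: norm_diff_sq scaleR_scaleC cinner_scaleC_right norm_scaleC power_mult_distrib mult_ac)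
    finally show "0 \<le> (norm x)^2 - 2 * Re (cinner x y) * t + (norm y)^2 * t^2" .
  qed simp
  then have "\<bar>Re (cinner x y)\<bar> \<le> norm x * norm y"
    by (metis abs_le_square_iff abs_mult abs_norm_cancel power_mult_distrib)
  then show ?thesis by simp
qed

lemma cinner_cs: "cmod (cinner x y) \<le> norm (x::'a::chilbert_space) * norm y"
proof (cases "cinner x y = 0")
  case True then show ?thesis by simp
next
  case False
  let ?c = "cinner x y"
  have "(cmod ?c)^2 = Re (cinner (?c *\<^sub>C x) y)"
    using cmod_power2[of ?c] by (simp add: cinner_scaleC_left power2_eq_square)
  also have "\<dots> \<le> norm (?c *\<^sub>C x) * norm y" by (rule re_cinner_le)
  also have "\<dots> = cmod ?c * (norm x * norm y)" by (simp add: norm_scaleC)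
  finally have "cmod ?c * cmod ?c \<le> cmod ?c * (norm x * norm y)" by (simp add: power2_eq_square)
  then show ?thesis using False by simp
qed


instantiation prod :: (chilbert_space, chilbert_space) chilbert_space
begin
definition scaleC_prod_def: "scaleC c z = (c *\<^sub>C fst z, c *\<^sub>C snd z)"
definition cinner_prod_def: "cinner z w = cinner (fst z) (fst w) + cinner (snd z) (snd w)"
instance
proof
  fix a b :: complex and x y z :: "'a \<times> 'b" and r :: real
  show "a *\<^sub>C (x + y) = a *\<^sub>C x + a *\<^sub>C y" by (simp add: scaleC_prod_def scaleC_add_right)
  show "(a + b) *\<^sub>C x = a *\<^sub>C x + b *\<^sub>C x" by (simp add: scaleC_prod_def scaleC_add_left)
  show "a *\<^sub>C b *\<^sub>C x = (a * b) *\<^sub>C x" by (simp add: scaleC_prod_def scaleC_scaleC)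
  show "1 *\<^sub>C x = x" by (simp add: scaleC_prod_def)
  show "r *\<^sub>R x = complex_of_real r *\<^sub>C x" by (simp add: scaleC_prod_def scaleR_scaleC scaleR_prod_def)
  show "cinner (x + y) z = cinner x z + cinner y z" by (simp add: cinner_prod_def cinner_add_left)
  show "cinner (a *\<^sub>C x) y = cnj a * cinner x y"
    by (simp add: cinner_prod_def scaleC_prod_def cinner_scaleC_left distrib_left)
  show "cinner x y = cnj (cinner y x)" by (metis cinner_prod_def cinner_commute complex_cnj_add)
  show "0 \<le> Re (cinner x x)" by (simp add: cinner_prod_def re_cinner_self)
  show "norm x = sqrt (Re (cinner x x))" by (simp add: cinner_prod_def re_cinner_self norm_prod_def)
qed
end

lemma pinner_eq: "pinner z w = cinner z w"
  by (simp add: pinner_def cinner_prod_def)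

section \<open>Orthogonal projections\<close>

lemma csub_zero: "csubspace M \<Longrightarrow> 0 \<in> M" by (simp add: csubspace_def)
lemma csub_add: "csubspace M \<Longrightarrow> x \<in> M \<Longrightarrow> y \<in> M \<Longrightarrow> x + y \<in> M" by (simp add: csubspace_def)
lemma csub_scaleC: "csubspace M \<Longrightarrow> x \<in> M \<Longrightarrow> c *\<^sub>C x \<in> M" by (simp add: csubspace_def)
lemma csub_scaleR: "csubspace (M::'a::chilbert_space set) \<Longrightarrow> x \<in> M \<Longrightarrow> r *\<^sub>R x \<in> M"
  by (simp add: csub_scaleC scaleR_scaleC)
lemma csub_minus: "csubspace (M::'a::chilbert_space set) \<Longrightarrow> x \<in> M \<Longrightarrow> - x \<in> M"
  using csub_scaleR[of M x "-1"] by simp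
lemma csub_diff: "csubspace (M::'a::chilbert_space set) \<Longrightarrow> x \<in> M \<Longrightarrow> y \<in> M \<Longrightarrow> x - y \<in> M"
  using csub_add[of M x "- y"] csub_minus[of M y] by simp

lemma proj_exists:
  fixes M :: "'a::chilbert_space set"
  assumes sub: "csubspace M" and cl: "closed M"
  shows "\<exists>p\<in>M. \<forall>m\<in>M. cinner (z - p) m = 0"
proof -
  define d where "d = Inf ((\<lambda>m. norm (z - m)) ` M)"
  have ne: "(\<lambda>m. norm (z - m)) ` M \<noteq> {}" using csub_zero[OF sub] by auto
  have bdd: "bdd_below ((\<lambda>m. norm (z - m)) ` M)" by (rule bdd_belowI[of _ 0]) auto
  have dle: "d \<le> norm (z - m)" if "m \<in> M" for m
    unfolding d_def using that bdd by (auto intro: cInf_lower)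
  have d0: "0 \<le> d" unfolding d_def using ne by (auto intro: cInf_greatest)
  have ex: "\<exists>p\<in>M. (norm (z - p))^2 < d^2 + 1 / real (Suc n)" for n
  proof -
    define e where "e = min 1 (1 / (real (Suc n) * (2 * d + 1)))"
    have e0: "e > 0" using d0 by (simp add: e_def)
    obtain p where p: "p \<in> M" "norm (z - p) < d + e"
      using cInf_lessD[OF ne, of "d + e"] e0 unfolding d_def by auto
    have "(norm (z - p))^2 < (d + e)^2"
      using p(2) d0 by (simp add: power_strict_mono)
    also have "\<dots> = d^2 + e * (2 * d + e)" by (simp add: power2_eq_square algebra_simps)
    also have "\<dots> \<le> d^2 + e * (2 * d + 1)" using e0 d0 by (simp add: e_def)
    also have "e * (2 * d + 1) \<le> 1 / real (Suc n)"
    proof -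
      have "e \<le> 1 / (real (Suc n) * (2 * d + 1))" by (simp add: e_def)
      then have "e * (2 * d + 1) \<le> 1 / (real (Suc n) * (2 * d + 1)) * (2 * d + 1)"
        using d0 by (intro mult_right_mono) auto
      also have "\<dots> = 1 / real (Suc n)"
      proof -
        have "2 * d + 1 \<noteq> 0" using d0 by simp
        then show ?thesis by simp
      qed
      finally show ?thesis .
    qed
    finally show ?thesis using p(1) by auto
  qed
  then obtain p where pM: "\<And>n. p n \<in> M" and pn: "\<And>n. (norm (z - p n))^2 < d^2 + 1 / real (Suc n)"
    by metis
  have para: "(norm (a - b))^2 \<le> 2 * (norm (z - a))^2 + 2 * (norm (z - b))^2 - 4 * d^2"
    if "a \<in> M" "b \<in> M" for a b
  proof -
    have mid: "(1/2::real) *\<^sub>R (a + b) \<in> M" using that sub by (intro csub_scaleR csub_add) auto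
    have "2 * d \<le> 2 * norm (z - (1/2::real) *\<^sub>R (a + b))" using dle[OF mid] by simp
    also have "\<dots> = norm ((z - a) + (z - b))"
    proof -
      have "(z - a) + (z - b) = (2::real) *\<^sub>R (z - (1/2::real) *\<^sub>R (a + b))"
        by (simp add: algebra_simps scaleR_2)
      then show ?thesis by simp
    qed
    finally have "(2 * d)^2 \<le> (norm ((z - a) + (z - b)))^2"
      using d0 by (intro power_mono) auto
    then have h: "4 * d^2 \<le> (norm ((z - a) + (z - b)))^2" by (simp add: power_mult_distrib)
    have "a - b = (z - b) - (z - a)" by simp
    then have "(norm (a - b))^2 + (norm ((z - a) + (z - b)))^2 = 2 * (norm (z - a))^2 + 2 * (norm (z - b))^2"
      by (simp only: norm_diff_sq norm_add_sq) (simp add: cinner_commute[of "z - b"] algebra_simps)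
    then show ?thesis using h by linarith
  qed
  have cauchy: "Cauchy p"
  proof (rule metric_CauchyI)
    fix e :: real assume e: "e > 0"
    obtain N :: nat where N: "4 / e^2 < real N" using reals_Archimedean2 by blast
    show "\<exists>N. \<forall>m\<ge>N. \<forall>n\<ge>N. dist (p m) (p n) < e"
    proof (intro exI allI impI)
      fix m n assume mn: "N \<le> m" "N \<le> n"
      have "(dist (p m) (p n))^2 \<le> 2 * (norm (z - p m))^2 + 2 * (norm (z - p n))^2 - 4 * d^2"
        using para[OF pM pM] by (simp add: dist_norm)
      also have "\<dots> < 2 / real (Suc m) + 2 / real (Suc n)" using pn[of m] pn[of n] by simp
      also have "\<dots> \<le> 2 / real (Suc N) + 2 / real (Suc N)" using mn
        by (intro add_mono divide_left_mono) auto
      also have "\<dots> < e^2"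
      proof -
        have "4 < real N * e^2" using N e by (simp add: field_simps)
        moreover have "0 < e^2" using e by simp
        moreover have "e^2 * real (Suc N) = e^2 + real N * e^2" by (simp add: algebra_simps)
        ultimately have "4 < e^2 * real (Suc N)" by linarith
        then have "4 / real (Suc N) < e^2" by (simp add: pos_divide_less_eq del: of_nat_Suc)
        moreover have "2 / real (Suc N) + 2 / real (Suc N) = 4 / real (Suc N)" by (simp add: add_divide_distrib[symmetric])
        ultimately show ?thesis by simp
      qed
      finally show "dist (p m) (p n) < e" using e by (simp add: power_less_imp_less_base)
    qed
  qed
  then obtain P where lim: "p \<longlonglongrightarrow> P" using Cauchy_convergent_iff convergent_def by blast
  have PM: "P \<in> M" using closed_sequentially[OF cl] pM lim by blast
  have Pmin: "(norm (z - P))^2 \<le> (norm (z - m))^2" if "m \<in> M" for m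
  proof -
    have l1: "(\<lambda>n. (norm (z - p n))^2) \<longlonglongrightarrow> (norm (z - P))^2"
      by (intro tendsto_intros lim)
    have l2: "(\<lambda>n. d^2 + 1 / real (Suc n)) \<longlonglongrightarrow> d^2 + 0"
      by (intro tendsto_intros LIMSEQ_inverse_real_of_nat[unfolded inverse_eq_divide])
    have "(norm (z - P))^2 \<le> d^2 + 0"
      by (rule LIMSEQ_le[OF l1 l2]) (use pn less_imp_le in blast)
    also have "\<dots> \<le> (norm (z - m))^2" using dle[OF that] d0 by (simp add: power_mono)
    finally show ?thesis .
  qed
  have re0: "Re (cinner (z - P) m) = 0" if "m \<in> M" for m
  proof -
    have "(Re (cinner (z - P) m))^2 \<le> 0 * (norm m)^2"
    proof (rule discriminant)
      fix t :: real
      have "P + t *\<^sub>R m \<in> M" using sub PM that by (intro csub_add csub_scaleR)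
      then have "(norm (z - P))^2 \<le> (norm ((z - P) - t *\<^sub>R m))^2" using Pmin
        by (simp add: algebra_simps)
      also have "\<dots> = (norm (z - P))^2 + t^2 * (norm m)^2 - 2 * t * Re (cinner (z - P) m)"
        by (simp add: norm_diff_sq scaleR_scaleC cinner_scaleC_right norm_scaleC power_mult_distrib)
      finally show "0 \<le> 0 - 2 * Re (cinner (z - P) m) * t + (norm m)^2 * t^2"
        by (simp add: algebra_simps)
    qed simp
    then show ?thesis by simp
  qed
  have "cinner (z - P) m = 0" if "m \<in> M" for m
  proof -
    have "\<i> *\<^sub>C m \<in> M" using sub that by (rule csub_scaleC)
    then have "Re (cinner (z - P) (\<i> *\<^sub>C m)) = 0" by (rule re0)
    then have "Im (cinner (z - P) m) = 0" by (simp add: cinner_scaleC_right)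
    then show ?thesis using re0[OF that] by (simp add: complex_eq_iff)
  qed
  then show ?thesis using PM by blast
qed


definition cproj :: "'a::chilbert_space set \<Rightarrow> 'a \<Rightarrow> 'a" where
  "cproj M z = (THE p. p \<in> M \<and> (\<forall>m\<in>M. cinner (z - p) m = 0))"

lemma orth_proj_cproj: "orth_proj M = cproj M"
  by (simp add: fun_eq_iff orth_proj_def cproj_def pinner_eq)

lemma cproj_unique:
  fixes M :: "'a::chilbert_space set"
  assumes sub: "csubspace M" and "p \<in> M" "\<forall>m\<in>M. cinner (z - p) m = 0"
    and "q \<in> M" "\<forall>m\<in>M. cinner (z - q) m = 0"
  shows "p = q"
proof -
  have pq: "p - q \<in> M" using assms by (intro csub_diff) auto
  have "cinner (z - p) (p - q) = 0" "cinner (z - q) (p - q) = 0" using assms pq by auto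
  then have "cinner ((z - q) - (z - p)) (p - q) = 0" by (simp add: cinner_diff_left)
  then have "cinner (p - q) (p - q) = 0" by simp
  then have "norm (p - q) = 0" by (simp add: cinner_self)
  then show ?thesis by simp
qed

lemma cproj:
  fixes M :: "'a::chilbert_space set"
  assumes sub: "csubspace M" and cl: "closed M"
  shows "cproj M z \<in> M" "\<And>m. m \<in> M \<Longrightarrow> cinner (z - cproj M z) m = 0"
proof -
  have ex1: "\<exists>!p. p \<in> M \<and> (\<forall>m\<in>M. cinner (z - p) m = 0)"
    using proj_exists[OF sub cl, of z] cproj_unique[OF sub] by blast
  have "cproj M z \<in> M \<and> (\<forall>m\<in>M. cinner (z - cproj M z) m = 0)"
    unfolding cproj_def by (rule theI'[OF ex1])
  then show "cproj M z \<in> M" "\<And>m. m \<in> M \<Longrightarrow> cinner (z - cproj M z) m = 0" by auto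
qed

lemma cproj_diff:
  fixes M :: "'a::chilbert_space set"
  assumes sub: "csubspace M" and cl: "closed M"
  shows "cproj M (x - y) = cproj M x - cproj M y"
proof (rule cproj_unique[OF sub])
  show "cproj M (x - y) \<in> M" "\<forall>m\<in>M. cinner (x - y - cproj M (x - y)) m = 0" using cproj[OF sub cl] by auto
  show "cproj M x - cproj M y \<in> M" using cproj[OF sub cl] sub by (intro csub_diff) auto
  show "\<forall>m\<in>M. cinner (x - y - (cproj M x - cproj M y)) m = 0"
  proof
    fix m assume "m \<in> M"
    have "x - y - (cproj M x - cproj M y) = (x - cproj M x) - (y - cproj M y)" by simp
    then show "cinner (x - y - (cproj M x - cproj M y)) m = 0"
      using cproj(2)[OF sub cl \<open>m \<in> M\<close>, of x] cproj(2)[OF sub cl \<open>m \<in> M\<close>, of y]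
      by (simp add: cinner_diff_left)
  qed
qed

lemma cinner_orth_sym: "cinner (x::'a::chilbert_space) y = 0 \<Longrightarrow> cinner y x = 0"
  by (metis cinner_commute complex_cnj_zero)

lemma proj_gap:
  fixes M N :: "'a::chilbert_space set"
  assumes subM: "csubspace M" and clM: "closed M" and subN: "csubspace N" and clN: "closed N"
    and eta: "\<eta> \<ge> 0"
    and MN: "\<And>a. a \<in> M \<Longrightarrow> \<exists>b\<in>N. norm (a - b) \<le> \<eta> * norm a"
    and NM: "\<And>b. b \<in> N \<Longrightarrow> \<exists>a\<in>M. norm (b - a) \<le> \<eta> * norm b"
  shows "norm (cproj M z - cproj N z) \<le> \<eta> * norm z"
proof -
  let ?P = "cproj M" and ?Q = "cproj N"
  define b where "b = ?Q z"
  define w where "w = z - b"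
  have bN: "b \<in> N" using cproj[OF subN clN] b_def by auto
  have wN: "cinner w n = 0" if "n \<in> N" for n using cproj(2)[OF subN clN that] w_def b_def by auto
  have Pw: "norm (?P w) \<le> \<eta> * norm w"
  proof -
    have PwM: "?P w \<in> M" using cproj[OF subM clM] by auto
    obtain n where n: "n \<in> N" "norm (?P w - n) \<le> \<eta> * norm (?P w)" using MN[OF PwM] by auto
    have "cinner (w - ?P w) (?P w) = 0" using cproj(2)[OF subM clM PwM] .
    then have e1: "cinner w (?P w) = cinner (?P w) (?P w)" by (simp add: cinner_diff_left)
    have "(norm (?P w))^2 = Re (cinner w (?P w - n))"
      using e1 wN[OF n(1)] by (simp add: cinner_diff_right re_cinner_self)
    also have "\<dots> \<le> norm w * norm (?P w - n)" by (rule re_cinner_le)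
    also have "\<dots> \<le> norm w * (\<eta> * norm (?P w))" using n(2) by (simp add: mult_left_mono)
    finally have "norm (?P w) * norm (?P w) \<le> norm (?P w) * (\<eta> * norm w)"
      by (simp add: power2_eq_square mult_ac)
    then show ?thesis
      by (cases "norm (?P w) = 0") (use eta in auto)
  qed
  have Pb: "norm (b - ?P b) \<le> \<eta> * norm b"
  proof -
    obtain a where a: "a \<in> M" "norm (b - a) \<le> \<eta> * norm b" using NM[OF bN] by auto
    have PbM: "?P b \<in> M" using cproj[OF subM clM] by auto
    have o: "cinner (b - ?P b) (?P b - a) = 0" using cproj(2)[OF subM clM] PbM a(1) subM
      by (simp add: csub_diff)
    have "(norm (b - a))^2 = (norm ((b - ?P b) + (?P b - a)))^2" by simp
    also have "\<dots> = (norm (b - ?P b))^2 + (norm (?P b - a))^2"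
      by (simp only: norm_add_sq o) simp
    finally have "(norm (b - a))^2 = (norm (b - ?P b))^2 + (norm (?P b - a))^2" .
    then have "(norm (b - ?P b))^2 \<le> (norm (b - a))^2" by simp
    then have "norm (b - ?P b) \<le> norm (b - a)" by (simp add: power2_le_iff_abs_le)
    then show ?thesis using a(2) by simp
  qed
  have decomp: "?P z - ?Q z = ?P w - (b - ?P b)"
    using cproj_diff[OF subM clM, of z b] w_def b_def by simp
  have o2: "cinner (?P w) (b - ?P b) = 0"
  proof -
    have "?P w \<in> M" using cproj(1)[OF subM clM] .
    from cproj(2)[OF subM clM this, where z = b] show ?thesis by (rule cinner_orth_sym)
  qed
  have "(norm (?P z - ?Q z))^2 = (norm (?P w))^2 + (norm (b - ?P b))^2"
    using o2 by (simp only: decomp norm_diff_sq) simp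
  also have "\<dots> \<le> (\<eta> * norm w)^2 + (\<eta> * norm b)^2"
    using Pw Pb by (intro add_mono power_mono) auto
  also have "\<dots> = \<eta>^2 * ((norm w)^2 + (norm b)^2)" by (simp add: power_mult_distrib algebra_simps)
  also have "(norm w)^2 + (norm b)^2 = (norm z)^2"
  proof -
    have "z = w + b" using w_def by simp
    then have "(norm z)^2 = (norm w)^2 + (norm b)^2 + 2 * Re (cinner w b)" by (simp add: norm_add_sq)
    then show ?thesis using wN[OF bN] by simp
  qed
  finally have "(norm (?P z - ?Q z))^2 \<le> (\<eta> * norm z)^2" by (simp add: power_mult_distrib)
  then show ?thesis using eta by (simp add: power2_le_iff_abs_le)
qed


section \<open>Graphs\<close>

lemma ddc_parts:
  assumes "densely_defined_closed D T"
  shows "csubspace D" "closure D = UNIV" "\<And>x y. x \<in> D \<Longrightarrow> y \<in> D \<Longrightarrow> T (x + y) = T x + T y"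
    "\<And>c x. x \<in> D \<Longrightarrow> T (c *\<^sub>C x) = c *\<^sub>C T x" "closed (graph D T)"
  using assms unfolding densely_defined_closed_def by auto

lemma graph_csub:
  fixes D :: "'a::chilbert_space set" and T :: "'a \<Rightarrow> 'b::chilbert_space"
  assumes "densely_defined_closed D T"
  shows "csubspace (graph D T)"
proof -
  note d = ddc_parts[OF assms]
  have "0 \<in> graph D T"
  proof -
    have "(0::'a) \<in> D" using d(1) by (rule csub_zero)
    moreover have "T 0 = 0" using d(4)[OF \<open>(0::'a) \<in> D\<close>, of 0] by simp
    ultimately show ?thesis unfolding graph_def by (metis (mono_tags, lifting) mem_Collect_eq zero_prod_def)
  qed
  moreover have "\<forall>z\<in>graph D T. \<forall>w\<in>graph D T. z + w \<in> graph D T"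
    unfolding graph_def using d(3) csub_add[OF d(1)] by fastforce
  moreover have "\<forall>c. \<forall>z\<in>graph D T. c *\<^sub>C z \<in> graph D T"
    unfolding graph_def using d(4) csub_scaleC[OF d(1)] by (fastforce simp: scaleC_prod_def)
  ultimately show ?thesis unfolding csubspace_def by blast
qed

lemma gap_le:
  fixes D D' :: "'a::chilbert_space set" and T T' :: "'a \<Rightarrow> 'b::chilbert_space"
  assumes A: "densely_defined_closed D T" and B: "densely_defined_closed D' T'" and eta: "\<eta> \<ge> 0"
    and AB: "\<And>x. x \<in> D \<Longrightarrow> \<exists>x'\<in>D'. norm ((T x, x) - (T' x', x')) \<le> \<eta> * norm (T x, x)"
    and BA: "\<And>x'. x' \<in> D' \<Longrightarrow> \<exists>x\<in>D. norm ((T' x', x') - (T x, x)) \<le> \<eta> * norm (T' x', x')"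
  shows "gap D T D' T' \<le> \<eta>"
  unfolding gap_def orth_proj_cproj
proof (rule onorm_bound[OF eta])
  fix z :: "'b \<times> 'a"
  show "norm (cproj (graph D T) z - cproj (graph D' T') z) \<le> \<eta> * norm z"
  proof (rule proj_gap[OF graph_csub[OF A] ddc_parts(5)[OF A] graph_csub[OF B] ddc_parts(5)[OF B] eta])
    fix a assume "a \<in> graph D T"
    then obtain x where "x \<in> D" "a = (T x, x)" unfolding graph_def by auto
    then show "\<exists>b\<in>graph D' T'. norm (a - b) \<le> \<eta> * norm a"
      using AB[OF \<open>x \<in> D\<close>] unfolding graph_def by blast
  next
    fix b assume "b \<in> graph D' T'"
    then obtain x where "x \<in> D'" "b = (T' x, x)" unfolding graph_def by auto
    then show "\<exists>a\<in>graph D T. norm (b - a) \<le> \<eta> * norm b"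
      using BA[OF \<open>x \<in> D'\<close>] unfolding graph_def by blast
  qed
qed

section \<open>The perturbation\<close>

locale pert =
  fixes D :: "'a::chilbert_space set" and T :: "'a \<Rightarrow> 'b::chilbert_space" and x0 :: 'a and m :: real
  assumes ddc: "densely_defined_closed D T"
    and x0D: "x0 \<in> D" and x0n: "norm x0 = 1"
    and mpos: "m > 0" and mlow: "\<And>x. x \<in> D \<Longrightarrow> m * norm x \<le> norm (T x)"
begin

abbreviation "N \<equiv> norm (T x0)"
definition "s = m / N"
definition "al x = cinner x0 x"
definition "v x = x - al x *\<^sub>C x0"
definition "ph x = - cinner (T x0) (T (v x)) / complex_of_real (N^2)"
definition "R x = (complex_of_real s * al x + ph x) *\<^sub>C x0 + v x"
definition "T' x = T (R x)"

lemma subD: "csubspace D" using ddc_parts(1)[OF ddc] .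
lemma T_add: "x \<in> D \<Longrightarrow> y \<in> D \<Longrightarrow> T (x + y) = T x + T y" using ddc_parts(3)[OF ddc] .
lemma T_scaleC: "x \<in> D \<Longrightarrow> T (c *\<^sub>C x) = c *\<^sub>C T x" using ddc_parts(4)[OF ddc] .
lemma T_minus: "x \<in> D \<Longrightarrow> T (- x) = - T x"
  using T_scaleC[of x "-1"] by (simp add: scaleC_minus_left)
lemma T_diff: "x \<in> D \<Longrightarrow> y \<in> D \<Longrightarrow> T (x - y) = T x - T y"
  using T_add[of x "- y"] T_minus[of y] csub_minus[OF subD, of y] by simp

lemma Nm: "m \<le> N" using mlow[OF x0D] x0n by simp
lemma Npos: "N > 0" using Nm mpos by linarith
lemma s_pos: "s > 0" using Npos mpos by (simp add: s_def)
lemma s_le1: "s \<le> 1" using Npos Nm by (simp add: s_def)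
lemma sN: "s * N = m" using Npos by (simp add: s_def)

lemma cinner_x0: "cinner x0 x0 = 1" using x0n by (simp add: cinner_self)
lemma cinner_Tx0: "cinner (T x0) (T x0) = complex_of_real (N^2)" by (simp add: cinner_self)

lemma vD: "x \<in> D \<Longrightarrow> v x \<in> D"
  unfolding v_def using subD x0D by (intro csub_diff csub_scaleC) auto
lemma v_orth: "cinner x0 (v x) = 0"
  by (simp add: v_def cinner_diff_right cinner_scaleC_right cinner_x0 al_def)
lemma x_decomp: "x = al x *\<^sub>C x0 + v x" by (simp add: v_def)
lemma RD: "x \<in> D \<Longrightarrow> R x \<in> D"
  unfolding R_def using subD x0D vD by (intro csub_add csub_scaleC) auto
lemma T'_eq: "x \<in> D \<Longrightarrow> T' x = (complex_of_real s * al x + ph x) *\<^sub>C T x0 + T (v x)"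
  unfolding T'_def R_def using x0D vD subD by (simp add: T_add T_scaleC csub_scaleC)

lemma key_orth: "cinner (T x0) (ph x *\<^sub>C T x0 + T (v x)) = 0"
proof -
  have "complex_of_real (N^2) \<noteq> 0" using Npos by simp
  then show ?thesis
    by (simp add: cinner_add_right cinner_scaleC_right cinner_Tx0 ph_def)
qed

lemma norm_x: "(norm x)^2 = (cmod (al x))^2 + (norm (v x))^2"
proof -
  have "(norm x)^2 = (norm (al x *\<^sub>C x0 + v x))^2" using x_decomp[of x] by simp
  also have "\<dots> = (cmod (al x))^2 + (norm (v x))^2"
    by (simp only: norm_add_sq) (simp add: norm_scaleC x0n cinner_scaleC_left v_orth)
  finally show ?thesis .
qed

lemma T'_low: assumes "x \<in> D" shows "m * norm x \<le> norm (T' x)"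
proof -
  let ?a = "complex_of_real s * al x"
  let ?Y = "ph x *\<^sub>C T x0 + T (v x)"
  have Y: "?Y = T (ph x *\<^sub>C x0 + v x)" using x0D vD[OF assms] subD
    by (simp add: T_add T_scaleC csub_scaleC)
  have YD: "ph x *\<^sub>C x0 + v x \<in> D" using x0D vD[OF assms] subD by (intro csub_add csub_scaleC)
  have nY: "m^2 * (norm (v x))^2 \<le> (norm ?Y)^2"
  proof -
    have "(norm (ph x *\<^sub>C x0 + v x))^2 = (cmod (ph x))^2 + (norm (v x))^2"
      by (simp only: norm_add_sq) (simp add: norm_scaleC x0n cinner_scaleC_left v_orth)
    then have "norm (v x) \<le> norm (ph x *\<^sub>C x0 + v x)"
      by (metis abs_norm_cancel le_add_same_cancel2 power2_le_iff_abs_le zero_le_power2 norm_ge_zero)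
    then have "m * norm (v x) \<le> norm ?Y" using mlow[OF YD] Y mpos
      by (metis mult_left_mono order_trans less_imp_le)
    then have "(m * norm (v x))^2 \<le> (norm ?Y)^2" using mpos by (intro power_mono) auto
    then show ?thesis by (simp add: power_mult_distrib)
  qed
  have eq: "T' x = ?a *\<^sub>C T x0 + ?Y" using T'_eq[OF assms] by (simp add: scaleC_add_left add.assoc)
  have "(norm (T' x))^2 = (cmod ?a)^2 * N^2 + (norm ?Y)^2"
    unfolding eq by (simp only: norm_add_sq) (simp add: norm_scaleC cinner_scaleC_left key_orth power_mult_distrib)
  also have "(cmod ?a)^2 * N^2 = m^2 * (cmod (al x))^2"
  proof -
    have "(cmod ?a)^2 * N^2 = (s * N)^2 * (cmod (al x))^2" using s_pos by (simp add: norm_mult power_mult_distrib)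
    then show ?thesis using sN by simp
  qed
  finally have "(norm (T' x))^2 \<ge> m^2 * ((cmod (al x))^2 + (norm (v x))^2)"
    using nY by (simp add: algebra_simps)
  then have "(m * norm x)^2 \<le> (norm (T' x))^2" by (simp only: norm_x[of x, symmetric] power_mult_distrib)
  then show ?thesis using mpos by (simp add: power2_le_iff_abs_le)
qed

lemma T'_x0: "norm (T' x0) = m"
proof -
  have "al x0 = 1" by (simp add: al_def cinner_x0)
  moreover have "v x0 = 0" by (simp add: v_def al_def cinner_x0)
  moreover have "T 0 = 0" using T_scaleC[OF x0D, of 0] by simp
  ultimately have "T' x0 = complex_of_real s *\<^sub>C T x0" using T'_eq[OF x0D] by (simp add: ph_def)
  then show ?thesis using sN s_pos by (simp add: norm_scaleC)
qed


end


context pert begin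
lemma al_add: "al (x + y) = al x + al y" by (simp add: al_def cinner_add_right)
lemma al_scaleC: "al (c *\<^sub>C x) = c * al x" by (simp add: al_def cinner_scaleC_right)
lemma v_add: "v (x + y) = v x + v y" by (simp add: v_def al_add scaleC_add_left algebra_simps)
lemma v_scaleC: "v (c *\<^sub>C x) = c *\<^sub>C v x"
  by (simp add: v_def al_scaleC scaleC_diff_right scaleC_scaleC)
lemma ph_add: "x \<in> D \<Longrightarrow> y \<in> D \<Longrightarrow> ph (x + y) = ph x + ph y"
  by (simp add: ph_def v_add T_add vD cinner_add_right diff_divide_distrib add_divide_distrib)
lemma ph_scaleC: "x \<in> D \<Longrightarrow> ph (c *\<^sub>C x) = c * ph x"
  by (simp add: ph_def v_scaleC T_scaleC vD cinner_scaleC_right)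
lemma R_add: "x \<in> D \<Longrightarrow> y \<in> D \<Longrightarrow> R (x + y) = R x + R y"
  by (simp add: R_def al_add ph_add v_add scaleC_add_left distrib_left algebra_simps)
lemma R_scaleC: "x \<in> D \<Longrightarrow> R (c *\<^sub>C x) = c *\<^sub>C R x"
  by (simp add: R_def al_scaleC ph_scaleC v_scaleC scaleC_add_right scaleC_scaleC algebra_simps)
lemma T'_add: "x \<in> D \<Longrightarrow> y \<in> D \<Longrightarrow> T' (x + y) = T' x + T' y"
  by (simp add: T'_def R_add T_add RD)
lemma T'_scaleC: "x \<in> D \<Longrightarrow> T' (c *\<^sub>C x) = c *\<^sub>C T' x"
  by (simp add: T'_def R_scaleC T_scaleC RD)

lemma qcs:
  assumes wD: "w \<in> D" and wo: "cinner x0 w = 0"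
  shows "(cmod (cinner (T x0) (T w)))^2 \<le> (N^2 - m^2) * (norm (T w))^2"
proof -
  let ?a = "cinner (T x0) (T w)"
  have "((cmod ?a)^2)^2 \<le> (N^2 - m^2) * ((cmod ?a)^2 * (norm (T w))^2)"
  proof (rule discriminant)
    fix r :: real
    define t where "t = - complex_of_real r * cnj ?a"
    have xD: "x0 + t *\<^sub>C w \<in> D" using x0D wD subD by (intro csub_add csub_scaleC)
    have nx: "(norm (x0 + t *\<^sub>C w))^2 = 1 + (cmod t)^2 * (norm w)^2"
      by (simp only: norm_add_sq) (simp add: x0n norm_scaleC cinner_scaleC_right wo power_mult_distrib)
    have "m^2 \<le> m^2 * (norm (x0 + t *\<^sub>C w))^2" using nx mpos by simp
    also have "\<dots> = (m * norm (x0 + t *\<^sub>C w))^2" by (simp add: power_mult_distrib)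
    also have "\<dots> \<le> (norm (T (x0 + t *\<^sub>C w)))^2" using mlow[OF xD] mpos by (intro power_mono) auto
    also have "T (x0 + t *\<^sub>C w) = T x0 + t *\<^sub>C T w" using x0D wD subD by (simp add: T_add T_scaleC csub_scaleC)
    also have "(norm (T x0 + t *\<^sub>C T w))^2 = N^2 + (cmod t)^2 * (norm (T w))^2 + 2 * Re (t * ?a)"
      by (simp only: norm_add_sq) (simp add: norm_scaleC cinner_scaleC_right power_mult_distrib)
    also have "t * ?a = - complex_of_real (r * (cmod ?a)^2)"
    proof -
      have ca: "cnj ?a * ?a = complex_of_real ((cmod ?a)^2)"
        using complex_norm_square[of ?a] by (simp add: mult.commute)
      have "t * ?a = - (complex_of_real r * (cnj ?a * ?a))" by (simp add: t_def mult.assoc)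
      also have "\<dots> = - complex_of_real (r * (cmod ?a)^2)" by (simp only: ca of_real_mult)
      finally show ?thesis .
    qed
    also have "(cmod t)^2 = r^2 * (cmod ?a)^2" by (simp add: t_def norm_mult power_mult_distrib)
    finally have "m^2 \<le> N^2 + r^2 * (cmod ?a)^2 * (norm (T w))^2 + 2 * Re (- complex_of_real (r * (cmod ?a)^2))" .
    then show "0 \<le> (N^2 - m^2) - 2 * (cmod ?a)^2 * r + ((cmod ?a)^2 * (norm (T w))^2) * r^2"
      by (simp add: algebra_simps)
  qed simp
  then show ?thesis
  proof (cases "?a = 0")
    case True then show ?thesis using Nm mpos by (simp add: power_mono)
  next
    case False
    then have p: "(cmod ?a)^2 > 0" by simp
    have "(cmod ?a)^2 * (cmod ?a)^2 \<le> (cmod ?a)^2 * ((N^2 - m^2) * (norm (T w))^2)"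
      using \<open>((cmod ?a)^2)^2 \<le> _\<close> by (simp add: power2_eq_square[of "(cmod ?a)^2"] algebra_simps)
    then show ?thesis using p by (rule mult_left_le_imp_le)
  qed
qed

lemma cinner_cs': "cmod (cinner a x) \<le> norm x * norm (a::'c::chilbert_space)"
  using cinner_cs[of a x] by (simp add: mult.commute)

lemma bl_cinner: "bounded_linear (\<lambda>x. cinner (a::'c::chilbert_space) x)"
  by (rule bounded_linear_intro[where K = "norm a"])
    (simp_all add: cinner_add_right scaleR_scaleC cinner_scaleC_right scaleR_conv_of_real
      cinner_cs')

lemma bl_scaleC: "bounded_linear (\<lambda>c. c *\<^sub>C (a::'c::chilbert_space))"
  by (rule bounded_linear_intro[where K = "norm a"])
    (simp_all add: scaleC_add_left scaleR_scaleC scaleC_scaleC scaleR_conv_of_real norm_scaleC)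

lemma graph_mem: "(y, x) \<in> graph D T \<longleftrightarrow> x \<in> D \<and> y = T x"
  by (auto simp: graph_def)

lemma closed_T': "closed (graph D T')"
proof (rule closed_sequential_limits[THEN iffD2], intro allI impI, elim conjE)
  fix f and l :: "'b \<times> 'a"
  assume fS: "\<forall>n. f n \<in> graph D T'" and fl: "f \<longlonglongrightarrow> l"
  define xs where "xs n = snd (f n)" for n
  define y where "y = fst l"
  define x where "x = snd l"
  have xsD: "xs n \<in> D" and fx: "fst (f n) = T' (xs n)" for n
    using fS[rule_format, of n] unfolding xs_def graph_def by auto
  have ly: "(\<lambda>n. T' (xs n)) \<longlonglongrightarrow> y" using tendsto_fst[OF fl] fx unfolding y_def by simp
  have lx: "xs \<longlonglongrightarrow> x" using tendsto_snd[OF fl] unfolding xs_def x_def .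
  have lal: "(\<lambda>n. al (xs n)) \<longlonglongrightarrow> al x"
    unfolding al_def using bounded_linear.tendsto[OF bl_cinner lx] .
  define u where "u n = ph (xs n) *\<^sub>C x0 + v (xs n)" for n
  have uD: "u n \<in> D" for n using x0D vD[OF xsD] subD unfolding u_def by (intro csub_add csub_scaleC)
  have Tu: "T (u n) = T' (xs n) - (complex_of_real s * al (xs n)) *\<^sub>C T x0" for n
    using T'_eq[OF xsD, of n] x0D vD[OF xsD] subD unfolding u_def
    by (simp add: T_add T_scaleC csub_scaleC scaleC_add_left algebra_simps)
  define y' where "y' = y - (complex_of_real s * al x) *\<^sub>C T x0"
  have lTu: "(\<lambda>n. T (u n)) \<longlonglongrightarrow> y'"
    unfolding Tu y'_def
    by (intro tendsto_diff ly bounded_linear.tendsto[OF bl_scaleC] tendsto_mult tendsto_const lal)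
  have cu: "Cauchy u"
  proof (rule metric_CauchyI)
    fix e :: real assume e: "e > 0"
    have "Cauchy (\<lambda>n. T (u n))" using lTu by (rule LIMSEQ_imp_Cauchy)
    from metric_CauchyD[OF this, of "e * m"] e mpos
    obtain M where M: "\<And>a b. M \<le> a \<Longrightarrow> M \<le> b \<Longrightarrow> dist (T (u a)) (T (u b)) < e * m" by auto
    show "\<exists>M. \<forall>a\<ge>M. \<forall>b\<ge>M. dist (u a) (u b) < e"
    proof (intro exI allI impI)
      fix a b assume ab: "M \<le> a" "M \<le> b"
      have "m * dist (u a) (u b) \<le> norm (T (u a - u b))"
        unfolding dist_norm using mlow[of "u a - u b"] uD subD by (simp add: csub_diff)
      also have "\<dots> = dist (T (u a)) (T (u b))" using uD by (simp add: T_diff dist_norm)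
      also have "\<dots> < e * m" using M ab by auto
      finally show "dist (u a) (u b) < e" using mpos by (simp add: mult.commute)
    qed
  qed
  then obtain u0 where lu: "u \<longlonglongrightarrow> u0" using Cauchy_convergent_iff convergent_def by blast
  have "(y', u0) \<in> graph D T"
  proof (rule closed_sequentially[OF ddc_parts(5)[OF ddc]])
    show "(T (u n), u n) \<in> graph D T" for n using uD by (simp add: graph_mem)
    show "(\<lambda>n. (T (u n), u n)) \<longlonglongrightarrow> (y', u0)" by (intro tendsto_Pair lTu lu)
  qed
  then have u0D: "u0 \<in> D" and Tu0: "T u0 = y'" by (auto simp: graph_mem)
  have orth0: "cinner (T x0) y' = 0"
  proof -
    have "(\<lambda>n. cinner (T x0) (T (u n))) \<longlonglongrightarrow> cinner (T x0) y'"
      using bounded_linear.tendsto[OF bl_cinner lTu] .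
    moreover have "cinner (T x0) (T (u n)) = 0" for n
      using key_orth[of "xs n"] x0D vD[OF xsD] subD unfolding u_def
      by (simp add: T_add T_scaleC csub_scaleC)
    ultimately show ?thesis by (simp add: LIMSEQ_const_iff)
  qed
  define c where "c = cinner x0 u0"
  have xs_eq: "xs n = u n + (al (xs n) - cinner x0 (u n)) *\<^sub>C x0" for n
  proof -
    have "cinner x0 (u n) = ph (xs n)"
      unfolding u_def by (simp add: cinner_add_right cinner_scaleC_right cinner_x0 v_orth)
    then show ?thesis unfolding u_def using x_decomp[of "xs n"]
      by (simp add: scaleC_diff_left algebra_simps)
  qed
  have "(\<lambda>n. u n + (al (xs n) - cinner x0 (u n)) *\<^sub>C x0) \<longlonglongrightarrow> u0 + (al x - c) *\<^sub>C x0"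
    unfolding c_def
    by (intro tendsto_add lu bounded_linear.tendsto[OF bl_scaleC] tendsto_diff lal
        bounded_linear.tendsto[OF bl_cinner])
  then have "xs \<longlonglongrightarrow> u0 + (al x - c) *\<^sub>C x0" using xs_eq by simp
  then have xeq: "x = u0 + (al x - c) *\<^sub>C x0" using lx LIMSEQ_unique by blast
  have xD: "x \<in> D" using xeq u0D x0D subD by (metis csub_add csub_scaleC)
  have vx: "v x = u0 - c *\<^sub>C x0" unfolding v_def using xeq
    by (metis (no_types, lifting) add_diff_cancel_left' diff_add_eq scaleC_diff_left diff_diff_eq2
        add_diff_eq)
  have Tvx: "T (v x) = y' - c *\<^sub>C T x0" using vx u0D x0D subD Tu0
    by (simp add: T_diff T_scaleC csub_scaleC)
  have phx: "ph x = c"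
  proof -
    have "complex_of_real (N^2) \<noteq> 0" using Npos by simp
    then show ?thesis
      by (simp add: ph_def Tvx cinner_diff_right cinner_scaleC_right orth0 cinner_Tx0)
  qed
  have "T' x = y"
    using T'_eq[OF xD] phx Tvx unfolding y'_def by (simp add: scaleC_add_left algebra_simps)
  moreover have "l = (y, x)" by (simp add: x_def y_def)
  ultimately show "l \<in> graph D T'" using xD by (simp add: graph_def)
qed

lemma ddc_T': "densely_defined_closed D T'"
  unfolding densely_defined_closed_def
  using subD ddc_parts(2)[OF ddc] T'_add T'_scaleC closed_T' by blast

end


context pert begin

lemma phN:
  assumes xD: "x \<in> D" and Ng: "N^2 - m^2 \<le> \<gamma>^2" and g0: "\<gamma> \<ge> 0"
  shows "cmod (ph x) * N^2 \<le> \<gamma> * norm (T (v x))"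
proof -
  let ?a = "cinner (T x0) (T (v x))"
  have "cmod (ph x) * N^2 = cmod ?a"
  proof -
    have nn: "cmod ((complex_of_real N)^2) = N^2" by (simp add: norm_power)
    show ?thesis using Npos by (simp add: ph_def norm_divide nn)
  qed
  also have "cmod ?a \<le> \<gamma> * norm (T (v x))"
  proof -
    have "(cmod ?a)^2 \<le> (N^2 - m^2) * (norm (T (v x)))^2" using qcs[OF vD[OF xD] v_orth] .
    also have "\<dots> \<le> \<gamma>^2 * (norm (T (v x)))^2" using Ng by (simp add: mult_right_mono)
    also have "\<dots> = (\<gamma> * norm (T (v x)))^2" by (simp add: power_mult_distrib)
    finally have "(cmod ?a)^2 \<le> (\<gamma> * norm (T (v x)))^2" .
    then show ?thesis by (rule power2_le_imp_le) (simp add: g0)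
  qed
  finally show ?thesis .
qed

lemma al_le: "cmod (al x) \<le> norm x"
  using cinner_cs[of x0 x] x0n by (simp add: al_def)

lemma Tv_eq: "x \<in> D \<Longrightarrow> T (v x) = T x - al x *\<^sub>C T x0"
  unfolding v_def using x0D subD by (simp add: T_diff T_scaleC csub_scaleC)

lemma dirAB:
  assumes xD: "x \<in> D" and g0: "\<gamma> \<ge> 0" and Ng: "N^2 - m^2 \<le> \<gamma>^2" and NmG: "N - m \<le> \<gamma>"
  shows "\<exists>x''\<in>D. norm ((T x, x) - (T' x'', x'')) \<le> \<gamma> * (2 * m + 1) / m^2 * norm (T x, x)"
proof -
  define \<beta> where "\<beta> = al x"
  define p where "p = ph x"
  define c where "c = (\<beta> - p) / complex_of_real s"
  define x'' where "x'' = c *\<^sub>C x0 + v x"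
  define n where "n = norm (T x, x)"
  have sne: "complex_of_real s \<noteq> 0" using s_pos by simp
  have x''D: "x'' \<in> D" unfolding x''_def using x0D vD[OF xD] subD by (intro csub_add csub_scaleC)
  have alx'': "al x'' = c" by (simp add: x''_def al_def cinner_add_right cinner_scaleC_right cinner_x0 v_orth[unfolded al_def])
  have vx'': "v x'' = v x" by (simp add: v_def[of x''] alx'') (simp add: x''_def)
  have phx'': "ph x'' = p" by (simp add: ph_def vx'' p_def)
  have "R x'' = x"
  proof -
    have "complex_of_real s * c + p = \<beta>" using sne by (simp add: c_def)
    then show ?thesis unfolding R_def alx'' phx'' vx'' using x_decomp[of x] by (simp add: \<beta>_def)
  qed
  then have T'x'': "T' x'' = T x" by (simp add: T'_def)
  have diff: "(T x, x) - (T' x'', x'') = (0, (\<beta> - c) *\<^sub>C x0)"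
  proof -
    have "x - x'' = (\<beta> - c) *\<^sub>C x0"
      using x_decomp[of x] unfolding x''_def \<beta>_def
      by (metis add_diff_cancel_right scaleC_diff_left)
    then show ?thesis by (simp add: T'x'')
  qed
  have nd: "norm ((T x, x) - (T' x'', x'')) = cmod (\<beta> - c)"
    unfolding diff by (simp add: norm_Pair norm_scaleC x0n)
  have bn: "cmod \<beta> \<le> n" unfolding \<beta>_def n_def using al_le[of x] norm_snd_le[of x "T x"]
    by (metis order_trans)
  have tn: "norm (T x) \<le> n" unfolding n_def by (rule norm_fst_le)
  have n0: "n \<ge> 0" unfolding n_def by simp
  have Tv: "norm (T (v x)) \<le> norm (T x) + cmod \<beta> * N"
    using Tv_eq[OF xD] norm_triangle_ineq4[of "T x" "\<beta> *\<^sub>C T x0"] by (simp add: norm_scaleC \<beta>_def)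
  have pN2: "cmod p * N * N \<le> \<gamma> * (norm (T x) + cmod \<beta> * N)"
    using phN[OF xD Ng g0] Tv g0 by (simp add: p_def power2_eq_square mult.assoc)
      (meson mult_left_mono order_trans)
  have pN: "cmod p * N \<le> \<gamma> * n / m + \<gamma> * n"
  proof -
    have "cmod p * N \<le> \<gamma> * norm (T x) / N + \<gamma> * cmod \<beta>"
      using pN2 Npos by (simp add: field_simps)
    also have "\<gamma> * norm (T x) / N \<le> \<gamma> * n / m"
      using Nm mpos tn g0 n0 by (intro frac_le mult_left_mono) auto
    also have "\<gamma> * cmod \<beta> \<le> \<gamma> * n" using bn g0 by (simp add: mult_left_mono)
    finally show ?thesis by simp
  qed
  have key: "cmod (\<beta> - c) * m = cmod ((complex_of_real s - 1) * \<beta> + p) * N"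
  proof -
    have cs: "c * complex_of_real s = \<beta> - p" using sne by (simp add: c_def)
    have "(\<beta> - c) * complex_of_real s = \<beta> * complex_of_real s - c * complex_of_real s"
      by (simp add: algebra_simps)
    also have "\<dots> = (complex_of_real s - 1) * \<beta> + p" by (simp only: cs) (simp add: algebra_simps)
    finally have eq: "(\<beta> - c) * complex_of_real s = (complex_of_real s - 1) * \<beta> + p" .
    have h: "cmod ((\<beta> - c) * complex_of_real s) = cmod (\<beta> - c) * s"
      using s_pos by (simp add: norm_mult)
    have "cmod (\<beta> - c) * s = cmod ((complex_of_real s - 1) * \<beta> + p)"
      using h unfolding eq by simp
    then have "cmod (\<beta> - c) * (s * N) = cmod ((complex_of_real s - 1) * \<beta> + p) * N"
      by (simp only: mult.assoc[symmetric])
    then show ?thesis by (simp only: sN)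
  qed
  have "cmod ((complex_of_real s - 1) * \<beta> + p) \<le> (1 - s) * cmod \<beta> + cmod p"
  proof -
    have "complex_of_real s - 1 = complex_of_real (s - 1)" by simp
    then have "cmod ((complex_of_real s - 1) * \<beta>) = \<bar>s - 1\<bar> * cmod \<beta>"
      by (simp only: norm_mult norm_of_real)
    then have "cmod ((complex_of_real s - 1) * \<beta>) = (1 - s) * cmod \<beta>"
      using s_le1 by simp
    then show ?thesis by (metis norm_triangle_ineq)
  qed
  then have "cmod (\<beta> - c) * m \<le> ((1 - s) * cmod \<beta> + cmod p) * N"
    unfolding key using Npos by (simp add: mult_right_mono)
  also have "\<dots> = (N - m) * cmod \<beta> + cmod p * N"
    using sN Npos by (simp add: algebra_simps s_def)
  also have "(N - m) * cmod \<beta> \<le> \<gamma> * n" using NmG bn g0 Nm by (intro mult_mono) auto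
  finally have "cmod (\<beta> - c) * m \<le> \<gamma> * n + (\<gamma> * n / m + \<gamma> * n)" using pN by linarith
  then have "cmod (\<beta> - c) \<le> (\<gamma> * n + (\<gamma> * n / m + \<gamma> * n)) / m" using mpos by (simp add: field_simps)
  also have "\<dots> = \<gamma> * (2 * m + 1) / m^2 * n" using mpos by (simp add: field_simps power2_eq_square)
  finally have "norm ((T x, x) - (T' x'', x'')) \<le> \<gamma> * (2 * m + 1) / m^2 * n" using nd by simp
  then show ?thesis using x''D unfolding n_def by blast
qed

lemma dirBA:
  assumes xD: "x \<in> D" and g0: "\<gamma> \<ge> 0" and Ng: "N^2 - m^2 \<le> \<gamma>^2" and NmG: "N - m \<le> \<gamma>"
    and gm: "2 * \<gamma> \<le> m"
  shows "\<exists>x''\<in>D. norm ((T' x, x) - (T x'', x'')) \<le> \<gamma> * (3 * m + 2) / m^2 * norm (T' x, x)"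
proof -
  define \<alpha> where "\<alpha> = al x"
  define p where "p = ph x"
  define n where "n = norm (T' x, x)"
  have diff: "(T' x, x) - (T (R x), R x) = (0, (\<alpha> - complex_of_real s * \<alpha> - p) *\<^sub>C x0)"
    using x_decomp[of x] by (simp add: T'_def R_def \<alpha>_def p_def scaleC_diff_left scaleC_add_left algebra_simps)
  have nd: "norm ((T' x, x) - (T (R x), R x)) = cmod (\<alpha> - complex_of_real s * \<alpha> - p)"
    unfolding diff by (simp add: norm_Pair norm_scaleC x0n)
  have an: "cmod \<alpha> \<le> n" unfolding \<alpha>_def n_def using al_le[of x] norm_snd_le[of x "T' x"]
    by (metis order_trans)
  have tn: "norm (T' x) \<le> n" unfolding n_def by (rule norm_fst_le)
  have Tv: "norm (T (v x)) \<le> norm (T' x) + m * cmod \<alpha> + cmod p * N"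
  proof -
    have "T (v x) = T' x - (complex_of_real s * \<alpha> + p) *\<^sub>C T x0"
      using T'_eq[OF xD] by (simp add: \<alpha>_def p_def)
    then have "norm (T (v x)) \<le> norm (T' x) + cmod (complex_of_real s * \<alpha> + p) * N"
      using norm_triangle_ineq4[of "T' x" "(complex_of_real s * \<alpha> + p) *\<^sub>C T x0"] by (simp add: norm_scaleC)
    also have "cmod (complex_of_real s * \<alpha> + p) * N \<le> (s * cmod \<alpha> + cmod p) * N"
      using Npos s_pos norm_triangle_ineq[of "complex_of_real s * \<alpha>" p]
      by (intro mult_right_mono) (auto simp: norm_mult)
    also have "(s * cmod \<alpha> + cmod p) * N = m * cmod \<alpha> + cmod p * N"
      using sN by (simp add: algebra_simps)
    finally show ?thesis by simp
  qed
  have "\<gamma> * norm (T (v x)) \<le> \<gamma> * (norm (T' x) + m * cmod \<alpha> + cmod p * N)"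
    using Tv g0 by (rule mult_left_mono)
  from order_trans[OF phN[OF xD Ng g0] this]
  have pN2: "cmod p * N^2 \<le> \<gamma> * norm (T' x) + \<gamma> * (m * cmod \<alpha>) + \<gamma> * (cmod p * N)"
    unfolding p_def by (simp add: distrib_left)
  have "\<gamma> * (cmod p * N) \<le> (N / 2) * (cmod p * N)"
    using gm Nm by (intro mult_right_mono) auto
  then have h1: "\<gamma> * (cmod p * N) \<le> cmod p * N^2 / 2" by (simp add: power2_eq_square mult_ac)
  have "cmod p * N^2 \<le> 2 * (\<gamma> * norm (T' x) + \<gamma> * (m * cmod \<alpha>))"
  proof -
    have aux: "A \<le> 2 * (B + C)" if "A \<le> B + C + E" "E \<le> A / 2" for A B C E :: real
      using that by (simp add: field_simps)
    show ?thesis by (rule aux[OF pN2 h1])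
  qed
  then have "cmod p * N^2 \<le> 2 * \<gamma> * (norm (T' x) + m * cmod \<alpha>)"
    by (simp add: distrib_left mult.assoc)
  also have "\<dots> \<le> 2 * \<gamma> * (n + m * n)"
    using tn an g0 mpos by (intro mult_left_mono add_mono) auto
  finally have p1: "cmod p * N^2 \<le> 2 * \<gamma> * (1 + m) * n" by (simp add: algebra_simps)
  have "cmod p * m^2 \<le> cmod p * N^2" using Nm mpos by (intro mult_left_mono power_mono) auto
  then have pm: "cmod p * m^2 \<le> 2 * \<gamma> * (1 + m) * n" using p1 by linarith
  have a1: "(1 - s) * cmod \<alpha> * m^2 \<le> \<gamma> * n * m"
  proof -
    have "(1 - s) * m \<le> (1 - s) * N" using s_le1 Nm by (intro mult_left_mono) auto
    also have "\<dots> = N - m" using sN by (simp add: algebra_simps)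
    finally have "(1 - s) * m \<le> \<gamma>" using NmG by linarith
    then have "(1 - s) * m * cmod \<alpha> \<le> \<gamma> * n" using an g0 s_le1 by (intro mult_mono) auto
    then have "((1 - s) * m * cmod \<alpha>) * m \<le> (\<gamma> * n) * m" using mpos by (intro mult_right_mono) auto
    then show ?thesis by (simp add: power2_eq_square mult_ac)
  qed
  have tri: "cmod (\<alpha> - complex_of_real s * \<alpha> - p) \<le> (1 - s) * cmod \<alpha> + cmod p"
  proof -
    have "\<alpha> - complex_of_real s * \<alpha> - p = complex_of_real (1 - s) * \<alpha> - p" by (simp add: algebra_simps)
    moreover have "cmod (complex_of_real (1 - s) * \<alpha>) = (1 - s) * cmod \<alpha>"
    proof -
      have c1: "cmod (complex_of_real (1 - s)) = 1 - s" using s_le1 by (subst norm_of_real) simp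
      show ?thesis by (simp only: norm_mult c1)
    qed
    ultimately show ?thesis using norm_triangle_ineq4[of "complex_of_real (1 - s) * \<alpha>" p]
      by (simp only:)
  qed
  have "cmod (\<alpha> - complex_of_real s * \<alpha> - p) * m^2 \<le> ((1 - s) * cmod \<alpha> + cmod p) * m^2"
    using tri by (simp add: mult_right_mono)
  also have "\<dots> \<le> \<gamma> * n * m + 2 * \<gamma> * (1 + m) * n" using a1 pm by (simp add: algebra_simps)
  also have "\<dots> = \<gamma> * (3 * m + 2) * n" by (simp add: algebra_simps)
  finally have f: "cmod (\<alpha> - complex_of_real s * \<alpha> - p) * m^2 \<le> \<gamma> * (3 * m + 2) * n" .
  have "cmod (\<alpha> - complex_of_real s * \<alpha> - p) \<le> \<gamma> * (3 * m + 2) * n / m^2"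
    using f mpos by (simp add: le_divide_eq)
  then have "cmod (\<alpha> - complex_of_real s * \<alpha> - p) \<le> \<gamma> * (3 * m + 2) / m^2 * n" by simp
  then have "norm ((T' x, x) - (T (R x), R x)) \<le> \<gamma> * (3 * m + 2) / m^2 * n" using nd by simp
  then show ?thesis using RD[OF xD] unfolding n_def by blast
qed

end


lemma exists_unit:
  fixes D :: "'a::chilbert_space set"
  assumes inf: "infinite_dimensional TYPE('a)" and sub: "csubspace D" and cl: "closure D = UNIV"
  shows "\<exists>x\<in>D. norm x = 1"
proof -
  have "\<exists>x\<in>D. x \<noteq> 0"
  proof (rule ccontr)
    assume "\<not> (\<exists>x\<in>D. x \<noteq> 0)"
    then have "D \<subseteq> {0}" by auto
    then have "closure D \<subseteq> closure {0}" by (rule closure_mono)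
    then have U: "UNIV \<subseteq> {0::'a}" using cl closure_closed[OF closed_singleton[of "0::'a"]] by simp
    have all0: "y = 0" for y :: 'a using U by blast
    have z: "(0::'a) \<in> cspan {}" unfolding cspan_def
      by (rule CollectI, rule exI[of _ "{}"], rule exI[of _ "\<lambda>_. 0"]) simp
    have "cspan ({}::'a set) = UNIV"
    proof (rule set_eqI)
      fix y :: 'a
      show "y \<in> cspan {} \<longleftrightarrow> y \<in> UNIV" using z all0[of y] by simp
    qed
    then show False using inf unfolding infinite_dimensional_def by blast
  qed
  then obtain x where x: "x \<in> D" "x \<noteq> 0" by auto
  then have "(1 / norm x) *\<^sub>R x \<in> D" using sub by (simp add: csub_scaleR)
  moreover have "norm ((1 / norm x) *\<^sub>R x) = 1" using x by simp
  ultimately show ?thesis by blast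
qed

theorem theorem3p8:
  fixes D :: "'a::chilbert_space set" and T :: "'a \<Rightarrow> 'b::chilbert_space"
    and \<epsilon> :: real
  assumes "infinite_dimensional TYPE('a)"
    and "infinite_dimensional TYPE('b)"
    and "densely_defined_closed D T"
    and "bounded_below D T"
    and "\<epsilon> > 0"
  shows "\<exists>D' :: 'a set. \<exists>T' :: 'a \<Rightarrow> 'b.
           densely_defined_closed D' T' \<and> minimum_attaining D' T' \<and> gap D T D' T' \<le> \<epsilon>"
proof -
  note ddc = assms(3)
  note d = ddc_parts[OF ddc]
  obtain c where c0: "c > 0" and cb: "\<And>x. x \<in> D \<Longrightarrow> c * norm x \<le> norm (T x)"
    using assms(4) unfolding bounded_below_def by auto
  define S where "S = {x \<in> D. norm x = 1}"
  define m where "m = min_modulus D T"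
  have Sne: "S \<noteq> {}" using exists_unit[OF assms(1) d(1) d(2)] unfolding S_def by auto
  have m_def': "m = Inf ((\<lambda>x. norm (T x)) ` S)" unfolding m_def min_modulus_def S_def ..
  have bdd: "bdd_below ((\<lambda>x. norm (T x)) ` S)" by (rule bdd_belowI[of _ 0]) auto
  have m_le: "m \<le> norm (T x)" if "x \<in> S" for x
    unfolding m_def' using that bdd by (auto intro: cInf_lower)
  have cm: "c \<le> m" unfolding m_def'
  proof (rule cInf_greatest)
    show "(\<lambda>x. norm (T x)) ` S \<noteq> {}" using Sne by simp
    fix y assume "y \<in> (\<lambda>x. norm (T x)) ` S"
    then obtain x where "x \<in> D" "norm x = 1" "y = norm (T x)" by (auto simp: S_def)
    then show "c \<le> y" using cb[of x] by simp
  qed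
  have mpos: "m > 0" using c0 cm by linarith
  have T0: "T 0 = 0" using d(4)[OF csub_zero[OF d(1)], of 0] by simp
  have mlow: "m * norm x \<le> norm (T x)" if xD: "x \<in> D" for x
  proof (cases "x = 0")
    case True then show ?thesis by (simp add: T0)
  next
    case False
    define u where "u = (1 / norm x) *\<^sub>R x"
    have uS: "u \<in> S" unfolding S_def u_def using xD False d(1) by (simp add: csub_scaleR)
    have "T u = (1 / norm x) *\<^sub>R T x"
      unfolding u_def scaleR_scaleC using d(4)[OF xD] by simp
    then have "norm (T u) = norm (T x) / norm x" by simp
    then have "m \<le> norm (T x) / norm x" using m_le[OF uS] by simp
    then show ?thesis using False by (simp add: field_simps)
  qed
  define \<gamma> where "\<gamma> = min (m / 2) (\<epsilon> * m^2 / (3 * m + 2))"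
  have g0: "\<gamma> > 0" using mpos assms(5) by (simp add: \<gamma>_def)
  have gm: "2 * \<gamma> \<le> m" by (simp add: \<gamma>_def)
  have ge: "\<gamma> * (3 * m + 2) / m^2 \<le> \<epsilon>"
  proof -
    have "\<gamma> \<le> \<epsilon> * m^2 / (3 * m + 2)" by (simp add: \<gamma>_def)
    then have "\<gamma> * (3 * m + 2) \<le> \<epsilon> * m^2" using mpos by (simp add: le_divide_eq)
    then show ?thesis using mpos by (simp add: divide_le_eq)
  qed
  define \<delta> where "\<delta> = \<gamma>^2 / (4 * m)"
  have d0: "\<delta> > 0" using g0 mpos by (simp add: \<delta>_def)
  have dg: "\<delta> \<le> \<gamma> / 8"
  proof -
    have "\<gamma>^2 \<le> \<gamma> * (m / 2)" using gm g0 by (simp add: power2_eq_square mult_left_mono)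
    moreover have "\<gamma> / 8 * (4 * m) = \<gamma> * (m / 2)" by simp
    moreover have h4: "4 * m > 0" using mpos by simp
    ultimately have "\<gamma>^2 / (4 * m) \<le> \<gamma> / 8" using pos_divide_le_eq[OF h4, of "\<gamma>^2" "\<gamma> / 8"] by simp
    then show ?thesis by (simp add: \<delta>_def)
  qed
  obtain x0 where x0S: "x0 \<in> S" and x0l: "norm (T x0) < m + \<delta>"
    using cInf_lessD[of "(\<lambda>x. norm (T x)) ` S" "m + \<delta>"] Sne d0 unfolding m_def'[symmetric] by auto
  have x0D: "x0 \<in> D" and x0n: "norm x0 = 1" using x0S by (auto simp: S_def)
  interpret pert D T x0 m using ddc x0D x0n mpos mlow by unfold_locales auto
  have NmG: "N - m \<le> \<gamma>" using x0l dg g0 by linarith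
  have Ng: "N^2 - m^2 \<le> \<gamma>^2"
  proof -
    have "N^2 \<le> (m + \<delta>)^2" using x0l Nm mpos by (intro power_mono) auto
    also have "\<dots> = m^2 + 2 * m * \<delta> + \<delta>^2" by (simp add: power2_eq_square algebra_simps)
    also have "2 * m * \<delta> = \<gamma>^2 / 2" using mpos by (simp add: \<delta>_def)
    also have "\<delta>^2 \<le> \<gamma>^2 / 2"
    proof -
      have "\<delta>^2 \<le> (\<gamma> / 8)^2" using dg d0 by (intro power_mono) auto
      also have "\<dots> \<le> \<gamma>^2 / 2" by (simp add: power_divide)
      finally show ?thesis .
    qed
    finally show ?thesis by simp
  qed
  define \<eta> where "\<eta> = \<gamma> * (3 * m + 2) / m^2"
  have eta0: "\<eta> \<ge> 0" using g0 mpos by (simp add: \<eta>_def)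
  have gapl: "gap D T D T' \<le> \<eta>"
  proof (rule gap_le[OF ddc ddc_T' eta0])
    fix x assume xD: "x \<in> D"
    obtain x'' where "x'' \<in> D" and h: "norm ((T x, x) - (T' x'', x'')) \<le> \<gamma> * (2 * m + 1) / m^2 * norm (T x, x)"
      using dirAB[OF xD less_imp_le[OF g0] Ng NmG] by auto
    moreover have "\<gamma> * (2 * m + 1) / m^2 * norm (T x, x) \<le> \<eta> * norm (T x, x)"
      unfolding \<eta>_def using g0 mpos by (intro mult_right_mono divide_right_mono mult_left_mono) auto
    ultimately show "\<exists>x'\<in>D. norm ((T x, x) - (T' x', x')) \<le> \<eta> * norm (T x, x)" by force
  next
    fix x assume xD: "x \<in> D"
    show "\<exists>x''\<in>D. norm ((T' x, x) - (T x'', x'')) \<le> \<eta> * norm (T' x, x)"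
      using dirBA[OF xD less_imp_le[OF g0] Ng NmG gm] unfolding \<eta>_def .
  qed
  have mm: "min_modulus D T' = m"
    unfolding min_modulus_def
  proof (rule cInf_eq_minimum)
    show "m \<in> (\<lambda>x. norm (T' x)) ` {x \<in> D. norm x = 1}" using x0D x0n T'_x0 by force
    show "\<And>y. y \<in> (\<lambda>x. norm (T' x)) ` {x \<in> D. norm x = 1} \<Longrightarrow> m \<le> y"
      using T'_low by force
  qed
  have "minimum_attaining D T'"
    unfolding minimum_attaining_def using x0D x0n T'_x0 mm by auto
  then show ?thesis using ddc_T' gapl ge unfolding \<eta>_def by (meson order_trans)
qed

end
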